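(* Let $\hat{\mathbb{N}}$ be the set of odd integers $n\ge3$, let $n \in \hat{\mathbb{N}}$ and $M \subseteq \hat{\mathbb{N}} \setminus \{n\}$. Let $T$ be the set of all partial Boolean functions whose domain does not contain the all-zero tuple. Then $\mathrm{pPol}\, R^{0,2}_n \not\supseteq T \cap \bigcap_{m \in M} \mathrm{pPol}\, R^{0,2}_m$.
   Context: Partial functions are on $\{0,1\}$: an $n$-ary partial function is a map $f:\operatorname{dom} f\to\{0,1\}$ with $\operatorname{dom} f\subseteq\{0,1\}^n$; an empty intersection of subsets of the set of all partial functions is understood as the set of all partial functions. For $\rho\subseteq\{0,1\}^h$, $\mathrm{pPol}\,\rho$ is the set of partial functions $f$ such that for every $h\times n$ matrix whose rows lie in $\operatorname{dom} f$ and whose columns lie in $\rho$, the column obtained by applying $f$ row-wise lies in $\rho$. Let $\rho_{0,2}=\{(0,0),(0,1),(1,0)\}$. For $n\ge2$, $R^{0,2}_{C,n}=\{(x_1,\dots,x_n)\in\{0,1\}^n: (x_i,x_{i+1})\in\rho_{0,2}\text{ for } i\in[n], \text{ with } x_{n+1}:=x_1\}$, $R^{0,2}_{K,n}=\{(x_1,\dots,x_n): (x_i,x_j)\in\rho_{0,2}\text{ for all } i\ne j\}$, and $R^{0,2}_n=R^{0,2}_{C,n}\times R^{0,2}_{K,n}\subseteq\{0,1\}^{2n}$. *)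

theory Defs
  imports Main
begin

text \<open>A partial Boolean function of arity n: a pair (n, f) where f maps tuples
  (lists of length n over {0,1}) in its domain to a value in {0,1}; None outside
  the domain.\<close>

type_synonym pfun = "nat \<times> (nat list \<Rightarrow> nat option)"

definition is_pfun :: "pfun \<Rightarrow> bool" where
  "is_pfun p \<longleftrightarrow> fst p \<ge> 1 \<and>
     (\<forall>x \<in> dom (snd p). length x = fst p \<and> set x \<subseteq> {0,1}) \<and>
     (\<forall>x y. snd p x = Some y \<longrightarrow> y \<in> {0,1})"

definition pPol :: "nat \<Rightarrow> nat list set \<Rightarrow> pfun set" where
  "pPol h \<rho> = {p. is_pfun p \<and>
     (\<forall>rows. length rows = h \<and> (\<forall>r \<in> set rows. r \<in> dom (snd p)) \<and>
        (\<forall>j < fst p. map (\<lambda>r. r ! j) rows \<in> \<rho>)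
        \<longrightarrow> map (\<lambda>r. the (snd p r)) rows \<in> \<rho>)}"

definition rho02 :: "(nat \<times> nat) set" where
  "rho02 = {(0,0), (0,1), (1,0)}"

definition RC02 :: "nat \<Rightarrow> nat list set" where
  "RC02 n = {x. length x = n \<and> set x \<subseteq> {0,1} \<and>
     (\<forall>i < n. (x ! i, x ! ((i + 1) mod n)) \<in> rho02)}"

definition RK02 :: "nat \<Rightarrow> nat list set" where
  "RK02 n = {x. length x = n \<and> set x \<subseteq> {0,1} \<and>
     (\<forall>i < n. \<forall>j < n. i \<noteq> j \<longrightarrow> (x ! i, x ! j) \<in> rho02)}"

definition R02 :: "nat \<Rightarrow> nat list set" where
  "R02 n = {x @ y | x y. x \<in> RC02 n \<and> y \<in> RK02 n}"

definition Nhat :: "nat set" where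
  "Nhat = {n. odd n \<and> n \<ge> 3}"

definition Tzero :: "pfun set" where
  "Tzero = {p. is_pfun p \<and> replicate (fst p) 0 \<notin> dom (snd p)}"

end

theory Submission
  imports Defs
begin

definition adj :: "nat \<Rightarrow> nat \<Rightarrow> nat \<Rightarrow> bool" where
  "adj n a b \<longleftrightarrow> b = Suc a mod n \<or> a = Suc b mod n"

definition memC :: "nat \<Rightarrow> nat \<Rightarrow> nat \<Rightarrow> bool" where
  "memC n i t \<longleftrightarrow> (if t < n*n then (i = t div n \<or> i = t mod n) \<and> \<not> adj n (t div n) (t mod n)
                     else (t - n*n) mod n = i)"

definition memA :: "nat \<Rightarrow> nat \<Rightarrow> nat \<Rightarrow> bool" where
  "memA n j t \<longleftrightarrow> n*n \<le> t \<and> (t - n*n) div n = j"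

definition vec :: "nat \<Rightarrow> (nat \<Rightarrow> bool) \<Rightarrow> nat list" where
  "vec n S = map (\<lambda>t. if S t then 1 else 0) [0..<2*n*n]"

definition disj :: "nat \<Rightarrow> nat list \<Rightarrow> nat list \<Rightarrow> bool" where
  "disj n r r' \<longleftrightarrow> (\<forall>t<2*n*n. \<not> (r!t = 1 \<and> r'!t = 1))"

lemma vec_nth: "t < 2*n*n \<Longrightarrow> vec n S ! t = (if S t then 1 else 0)"
  by (simp add: vec_def)

lemma vec_len[simp]: "length (vec n S) = 2*n*n" by (simp add: vec_def)

lemma vec_set: "set (vec n S) \<subseteq> {0,1}" by (auto simp: vec_def)

lemma disj_vec: "disj n (vec n S) (vec n S') \<longleftrightarrow> \<not> (\<exists>t<2*n*n. S t \<and> S' t)"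
  by (auto simp: disj_def vec_nth)

lemma vec_eq: "vec n S = vec n S' \<Longrightarrow> t < 2*n*n \<Longrightarrow> S t \<longleftrightarrow> S' t"
proof -
  assume a: "vec n S = vec n S'" "t < 2*n*n"
  then have "vec n S ! t = vec n S' ! t" by simp
  then show ?thesis using a(2) by (simp add: vec_nth split: if_splits)
qed

lemma adj_sym: "adj n a b \<longleftrightarrow> adj n b a" by (auto simp: adj_def)

lemma adj_irrefl: assumes "n \<ge> 2" "i < n" shows "\<not> adj n i i"
proof (cases "Suc i < n")
  case True thus ?thesis by (simp add: adj_def)
next
  case False
  then have e: "Suc i = n" using assms by simp
  then have "Suc i mod n = 0" by simp
  then show ?thesis using assms e by (simp add: adj_def)
qed

lemma enc_lt: "i < n \<Longrightarrow> j < n \<Longrightarrow> i*n + j < n*(n::nat)"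
proof -
  assume a: "i < n" "j < n"
  have "i*n + j < i*n + n" using a by simp
  also have "\<dots> = (Suc i)*n" by simp
  also have "\<dots> \<le> n*n" using a by (intro mult_le_mono1) simp
  finally show ?thesis .
qed

lemma enc_div: "j < n \<Longrightarrow> (i*n + j) div n = (i::nat)" by simp
lemma enc_mod: "j < n \<Longrightarrow> (i*n + j) mod n = (j::nat)" by simp

lemma F1: assumes "n \<ge> 3" "i < n" "j < n"
  shows "(\<exists>t<2*n*n. memC n i t \<and> memC n j t) \<longleftrightarrow> \<not> adj n i j"
proof
  assume "\<exists>t<2*n*n. memC n i t \<and> memC n j t"
  then obtain t where t: "memC n i t" "memC n j t" by blast
  show "\<not> adj n i j"
  proof (cases "t < n*n")
    case True
    with t have h: "i = t div n \<or> i = t mod n" "j = t div n \<or> j = t mod n" "\<not> adj n (t div n) (t mod n)"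
      by (auto simp: memC_def)
    show ?thesis
    proof (cases "i = j")
      case True then show ?thesis using adj_irrefl assms by auto
    next
      case False then show ?thesis using h adj_sym by metis
    qed
  next
    case False
    with t have "i = j" by (auto simp: memC_def)
    then show ?thesis using adj_irrefl assms by auto
  qed
next
  assume na: "\<not> adj n i j"
  let ?t = "i*n + j"
  have lt: "?t < n*n" using enc_lt assms by blast
  then have "?t < 2*n*n" by simp
  moreover have "memC n i ?t" "memC n j ?t" using lt na assms by (auto simp: memC_def)
  ultimately show "\<exists>t<2*n*n. memC n i t \<and> memC n j t" by blast
qed

lemma F2: assumes "i < n" "j < n"
  shows "\<exists>t<2*n*n. memA n i t \<and> memC n j t"
proof -
  let ?t = "n*n + (i*n + j)"
  have lt: "i*n+j < n*n" using enc_lt assms by blast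
  have "?t < 2*n*n" using lt by simp
  moreover have "memA n i ?t" "memC n j ?t" using assms by (auto simp: memA_def memC_def)
  ultimately show ?thesis by blast
qed

lemma F3: assumes "i < n" "j < n"
  shows "(\<exists>t<2*n*n. memA n i t \<and> memA n j t) \<longleftrightarrow> i = j"
proof
  assume "\<exists>t<2*n*n. memA n i t \<and> memA n j t"
  then show "i = j" by (auto simp: memA_def)
next
  assume "i = j"
  let ?t = "n*n + (i*n + 0)"
  have lt: "i*n+0 < n*n" using enc_lt assms by (metis gr_zeroI less_nat_zero_code)
  have "?t < 2*n*n" using lt by simp
  moreover have "memA n i ?t" using assms by (auto simp: memA_def)
  ultimately show "\<exists>t<2*n*n. memA n i t \<and> memA n j t" using \<open>i = j\<close> by blast
qed


definition vC :: "nat \<Rightarrow> nat \<Rightarrow> nat list" where "vC n i = vec n (memC n i)"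
definition vA :: "nat \<Rightarrow> nat \<Rightarrow> nat list" where "vA n i = vec n (memA n i)"
definition CR :: "nat \<Rightarrow> nat list set" where "CR n = vC n ` {..<n}"
definition AR :: "nat \<Rightarrow> nat list set" where "AR n = vA n ` {..<n}"
definition D :: "nat \<Rightarrow> nat list set" where "D n = CR n \<union> AR n"

lemma disjCC: "n \<ge> 3 \<Longrightarrow> i < n \<Longrightarrow> j < n \<Longrightarrow> disj n (vC n i) (vC n j) \<longleftrightarrow> adj n i j"
  using F1[of n i j] by (simp add: vC_def disj_vec)

lemma disjAC: "i < n \<Longrightarrow> j < n \<Longrightarrow> \<not> disj n (vA n i) (vC n j)"
  using F2[of i n j] by (simp add: vC_def vA_def disj_vec)

lemma disjCA: "i < n \<Longrightarrow> j < n \<Longrightarrow> \<not> disj n (vC n j) (vA n i)"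
  using F2[of i n j] by (auto simp: vC_def vA_def disj_vec)

lemma disjAA: "i < n \<Longrightarrow> j < n \<Longrightarrow> disj n (vA n i) (vA n j) \<longleftrightarrow> i \<noteq> j"
  using F3[of i n j] by (simp add: vA_def disj_vec)

lemma disj_sym: "disj n x y \<longleftrightarrow> disj n y x" by (auto simp: disj_def)

lemma disj_D_self: assumes "n \<ge> 3" "x \<in> D n" shows "\<not> disj n x x"
proof -
  from assms(2) consider (c) i where "i < n" "x = vC n i" | (a) i where "i < n" "x = vA n i"
    unfolding D_def CR_def AR_def by blast
  then show ?thesis
  proof cases
    case c then show ?thesis using disjCC[of n i i] adj_irrefl[of n i] assms(1) by simp
  next
    case a then show ?thesis using disjAA[of i n i] by simp
  qed
qed

lemma disj_CA_D: "x \<in> CR n \<Longrightarrow> y \<in> AR n \<Longrightarrow> \<not> disj n x y"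
  unfolding CR_def AR_def using disjCA by blast

lemma disj_AC_D: "x \<in> AR n \<Longrightarrow> y \<in> CR n \<Longrightarrow> \<not> disj n x y"
  unfolding CR_def AR_def using disjAC by blast

lemma vC_vA: assumes "n \<ge> 3" "i < n" "j < n" shows "vC n i \<noteq> vA n j"
proof
  assume e: "vC n i = vA n j"
  have lt: "i*n+i < n*n" using enc_lt assms by blast
  have "memC n i (i*n+i)" using lt assms adj_irrefl[of n i] by (auto simp: memC_def)
  moreover have "i*n+i < 2*n*n" using lt by simp
  ultimately have "memA n j (i*n+i)" using vec_eq e unfolding vC_def vA_def by blast
  then show False using lt by (auto simp: memA_def)
qed

lemma CR_AR: assumes "n \<ge> 3" "x \<in> CR n" shows "x \<notin> AR n"
  using assms vC_vA unfolding CR_def AR_def by auto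

lemma vC_inj: assumes "n \<ge> 3" "i < n" "j < n" "vC n i = vC n j" shows "i = j"
proof -
  have lt: "i*n+i < n*n" using enc_lt assms by blast
  have "memC n i (i*n+i)" using lt assms adj_irrefl[of n i] by (auto simp: memC_def)
  moreover have "i*n+i < 2*n*n" using lt by simp
  ultimately have "memC n j (i*n+i)" using vec_eq assms(4) unfolding vC_def by blast
  then show ?thesis using lt assms by (auto simp: memC_def)
qed

lemma D_len: "x \<in> D n \<Longrightarrow> length x = 2*n*n"
  by (auto simp: D_def CR_def AR_def vC_def vA_def)

lemma D_set: "x \<in> D n \<Longrightarrow> set x \<subseteq> {0,1}"
  using vec_set by (auto simp: D_def CR_def AR_def vC_def vA_def)

lemma D_nz: "n \<ge> 3 \<Longrightarrow> x \<in> D n \<Longrightarrow> x \<noteq> replicate (2*n*n) 0"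
proof
  assume "n \<ge> 3" "x \<in> D n" "x = replicate (2*n*n) 0"
  then have "disj n x x" by (auto simp: disj_def)
  then show False using disj_D_self \<open>n \<ge> 3\<close> \<open>x \<in> D n\<close> by blast
qed


lemma walk:
  assumes "odd m" "m < n" "\<forall>i<m. p i < n \<and> adj n (p i) (p (Suc i mod m))"
  shows False
proof -
  have m0: "m > 0" using assms(1) by (cases m) auto
  define d where "d i = (if p (Suc i mod m) = Suc (p i) mod n then (1::int) else -1)" for i
  have step: "int (p (Suc i mod m)) mod int n = (int (p i) + d i) mod int n" if "i < m" for i
  proof (cases "p (Suc i mod m) = Suc (p i) mod n")
    case True
    then have "int (p (Suc i mod m)) = int (Suc (p i)) mod int n" by (simp add: of_nat_mod)
    then show ?thesis using True by (simp add: d_def add.commute)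
  next
    case False
    with assms(3) that have e: "p i = Suc (p (Suc i mod m)) mod n" by (auto simp: adj_def)
    have lt: "p (Suc i mod m) < n" using assms(3) m0 by simp
    have "(int (p i) + d i) mod int n = (int (Suc (p (Suc i mod m))) mod int n - 1) mod int n"
      using False e by (simp add: d_def of_nat_mod)
    also have "\<dots> = (int (Suc (p (Suc i mod m))) - 1) mod int n" by (simp add: mod_diff_left_eq)
    also have "\<dots> = int (p (Suc i mod m))" using lt by simp
    finally show ?thesis using lt by simp
  qed
  have tele: "l \<le> m \<Longrightarrow> int (p (l mod m)) mod int n = (int (p 0) + (\<Sum>i<l. d i)) mod int n" for l
  proof (induction l)
    case 0 then show ?case by simp
  next
    case (Suc l)
    then have lm: "l < m" by simp
    have "Suc l mod m = Suc (l mod m) mod m" by (simp add: mod_Suc_eq)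
    then have "int (p (Suc l mod m)) mod int n = (int (p l) + d l) mod int n"
      using step[OF lm] lm by simp
    also have "\<dots> = (int (p l) mod int n + d l) mod int n" by (simp add: mod_add_left_eq)
    also have "int (p l) mod int n = (int (p 0) + (\<Sum>i<l. d i)) mod int n"
      using Suc lm by simp
    also have "((int (p 0) + (\<Sum>i<l. d i)) mod int n + d l) mod int n = (int (p 0) + (\<Sum>i<Suc l. d i)) mod int n"
      by (simp add: mod_add_left_eq add.assoc)
    finally show ?case .
  qed
  define S where "S = (\<Sum>i<m. d i)"
  have "int (p 0) mod int n = (int (p 0) + S) mod int n" using tele[of m] m0 by (simp add: S_def)
  then have "int n dvd int (p 0) - (int (p 0) + S)" by (simp only: mod_eq_dvd_iff)
  then have dv: "int n dvd S" by simp
  have "\<bar>S\<bar> \<le> (\<Sum>i<m. \<bar>d i\<bar>)" unfolding S_def by (rule sum_abs)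
  also have "\<dots> = (\<Sum>i<m. 1)" by (rule sum.cong) (auto simp: d_def)
  also have "\<dots> = int m" by simp
  finally have "\<bar>S\<bar> < int n" using assms(2) by simp
  then have S0: "S = 0"
  proof -
    assume a: "\<bar>S\<bar> < int n"
    show "S = 0"
    proof (rule ccontr)
      assume "S \<noteq> 0"
      then have "\<bar>int n\<bar> \<le> \<bar>S\<bar>" using dv by (rule dvd_imp_le_int)
      then show False using a by simp
    qed
  qed
  have par: "even ((\<Sum>i<l. d i) - int l)" for l
  proof (induction l)
    case 0 then show ?case by simp
  next
    case (Suc l)
    have "(\<Sum>i<Suc l. d i) - int (Suc l) = ((\<Sum>i<l. d i) - int l) + (d l - 1)" by simp
    moreover have "even (d l - 1)" by (simp add: d_def)
    ultimately show ?case using Suc by simp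
  qed
  from par[of m] S0 have "even (int m)" by (simp add: S_def)
  then show False using assms(1) by simp
qed


definition g :: "nat \<Rightarrow> nat list \<Rightarrow> nat" where
  "g n r = (if r = vC n 0 \<or> r = vC n (n-1) then 1 else 0)"

definition F :: "nat \<Rightarrow> pfun" where
  "F n = (2*n*n, \<lambda>x. if x \<in> D n then Some (g n x) else None)"

lemma dom_F: "dom (snd (F n)) = D n" by (auto simp: F_def dom_def)

lemma F_out: "x \<in> D n \<Longrightarrow> the (snd (F n) x) = g n x" by (simp add: F_def)

lemma g01: "g n x \<in> {0,1}" by (simp add: g_def)

lemma g1_CR: assumes "n \<ge> 3" "g n x = 1" shows "x \<in> CR n"
proof -
  have "x = vC n 0 \<or> x = vC n (n-1)" using assms(2) unfolding g_def by (cases "x = vC n 0 \<or> x = vC n (n-1)") simp_all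
  moreover have "0 < n" "n - 1 < n" using assms(1) by simp_all
  ultimately show ?thesis unfolding CR_def by blast
qed

lemma rho_iff: "a \<in> {0,1} \<Longrightarrow> b \<in> {0,1} \<Longrightarrow> (a,b) \<in> rho02 \<longleftrightarrow> \<not> (a = 1 \<and> b = (1::nat))"
  by (auto simp: rho02_def)

lemma rho11: "(1,1) \<notin> rho02" by (simp add: rho02_def)

lemma is_pfun_F: "n \<ge> 3 \<Longrightarrow> is_pfun (F n)"
  unfolding is_pfun_def using D_len D_set g01 by (auto simp: F_def dom_def split: if_splits)

lemma Tzero_F: "n \<ge> 3 \<Longrightarrow> F n \<in> Tzero"
  unfolding Tzero_def using is_pfun_F D_nz by (auto simp: F_def dom_def)

lemma col_split:
  assumes "length rows = 2*m"
  shows "map f rows \<in> R02 m \<longleftrightarrow> map f (take m rows) \<in> RC02 m \<and> map f (drop m rows) \<in> RK02 m"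
proof
  assume "map f rows \<in> R02 m"
  then obtain x y where xy: "map f rows = x @ y" "x \<in> RC02 m" "y \<in> RK02 m" by (auto simp: R02_def)
  have lx: "length x = m" using xy(2) by (simp add: RC02_def)
  have "map f (take m rows) = x" using xy(1) lx by (metis append_eq_conv_conj take_map)
  moreover have "map f (drop m rows) = y" using xy(1) lx by (metis append_eq_conv_conj drop_map)
  ultimately show "map f (take m rows) \<in> RC02 m \<and> map f (drop m rows) \<in> RK02 m"
    using xy by simp
next
  assume a: "map f (take m rows) \<in> RC02 m \<and> map f (drop m rows) \<in> RK02 m"
  have "map f rows = map f (take m rows) @ map f (drop m rows)"
    by (metis append_take_drop_id map_append)
  then show "map f rows \<in> R02 m" using a by (auto simp: R02_def)
qed

lemma top_disj:
  assumes "length tr = m" "\<forall>t<2*n*n. map (\<lambda>r. r!t) tr \<in> RC02 m" "i < m"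
  shows "disj n (tr!i) (tr!(Suc i mod m))"
  unfolding disj_def
proof (intro allI impI)
  fix t assume t: "t < 2*n*n"
  have "Suc i mod m < m" using assms(3) by simp
  then have "(tr!i!t, tr!(Suc i mod m)!t) \<in> rho02"
    using assms t by (auto simp: RC02_def)
  then show "\<not> (tr!i!t = 1 \<and> tr!(Suc i mod m)!t = 1)" using rho11 by auto
qed

lemma bot_disj:
  assumes "length br = m" "\<forall>t<2*n*n. map (\<lambda>r. r!t) br \<in> RK02 m" "i < m" "j < m" "i \<noteq> j"
  shows "disj n (br!i) (br!j)"
  unfolding disj_def
proof (intro allI impI)
  fix t assume t: "t < 2*n*n"
  have "(br!i!t, br!j!t) \<in> rho02"
    using assms t by (auto simp: RK02_def)
  then show "\<not> (br!i!t = 1 \<and> br!j!t = 1)" using rho11 by auto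
qed


lemma D_cases: "x \<in> D n \<Longrightarrow> x \<notin> CR n \<Longrightarrow> x \<in> AR n" by (simp add: D_def)

lemma bot_bound:
  assumes n3: "n \<ge> 3" and len: "length br = m" and sub: "set br \<subseteq> D n"
    and dj: "\<forall>i<m. \<forall>j<m. i \<noteq> j \<longrightarrow> disj n (br!i) (br!j)"
  shows "m \<le> n"
proof -
  have dist: "distinct br"
    unfolding distinct_conv_nth
  proof (intro allI impI)
    fix i j assume ij: "i < length br" "j < length br" "i \<noteq> j"
    show "br!i \<noteq> br!j"
    proof
      assume e: "br!i = br!j"
      have "br!i \<in> D n" using sub ij nth_mem by blast
      moreover have "disj n (br!i) (br!i)" using dj ij e len by metis
      ultimately show False using disj_D_self n3 by blast
    qed
  qed
  have card: "card (set br) = m" using distinct_card[OF dist] len by simp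
  have "set br \<subseteq> CR n \<or> set br \<subseteq> AR n"
  proof (rule ccontr)
    assume "\<not> ?thesis"
    then obtain x y where x: "x \<in> set br" "x \<notin> CR n" and y: "y \<in> set br" "y \<notin> AR n" by blast
    have xA: "x \<in> AR n" using x sub D_cases by blast
    have yC: "y \<in> CR n" using y sub by (auto simp: D_def)
    obtain i where i: "i < m" "br!i = x" using x len by (metis in_set_conv_nth)
    obtain j where j: "j < m" "br!j = y" using y len by (metis in_set_conv_nth)
    have "i \<noteq> j" using i j x yC by auto
    then have "disj n x y" using dj i j by metis
    then show False using disj_AC_D xA yC by blast
  qed
  moreover have "card (CR n) \<le> n" "card (AR n) \<le> n"
    unfolding CR_def AR_def by (metis card_image_le card_lessThan finite_lessThan)+
  moreover have "finite (CR n)" "finite (AR n)" unfolding CR_def AR_def by simp_all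
  ultimately show ?thesis using card card_mono by (metis le_trans)
qed

lemma top_noC:
  assumes n3: "n \<ge> 3" and m: "odd m" "m < n" and len: "length tr = m" and sub: "set tr \<subseteq> D n"
    and dj: "\<forall>i<m. disj n (tr!i) (tr!(Suc i mod m))"
    and i0: "i0 < m" "tr!i0 \<in> CR n"
  shows False
proof -
  have m0: "m > 0" using i0 by simp
  have inD: "l < m \<Longrightarrow> tr!l \<in> D n" for l using sub len nth_mem by blast
  have same: "tr!(Suc l mod m) \<in> CR n \<longleftrightarrow> tr!l \<in> CR n" if l: "l < m" for l
  proof -
    have l': "Suc l mod m < m" using m0 by simp
    have d: "disj n (tr!l) (tr!(Suc l mod m))" using dj l by blast
    show ?thesis
    proof (rule ccontr)
      assume "\<not> ?thesis"
      then consider "tr!(Suc l mod m) \<in> CR n" "tr!l \<in> AR n" | "tr!(Suc l mod m) \<in> AR n" "tr!l \<in> CR n"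
        using D_cases inD[OF l] inD[OF l'] by blast
      then show False
        using d disj_AC_D disj_CA_D by metis
    qed
  qed
  have all0: "l < m \<Longrightarrow> (tr!l \<in> CR n \<longleftrightarrow> tr!0 \<in> CR n)" for l
  proof (induction l)
    case 0 then show ?case by simp
  next
    case (Suc l)
    then have "l < m" by simp
    then have "tr!(Suc l mod m) \<in> CR n \<longleftrightarrow> tr!l \<in> CR n" by (rule same)
    then show ?case using Suc by simp
  qed
  have allC: "l < m \<Longrightarrow> tr!l \<in> CR n" for l using all0 i0 by blast
  define p where "p l = (SOME q. q < n \<and> tr!l = vC n q)" for l
  have p: "l < m \<Longrightarrow> p l < n \<and> tr!l = vC n (p l)" for l
  proof -
    assume "l < m"
    then have "\<exists>q. q < n \<and> tr!l = vC n q" using allC unfolding CR_def by blast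
    then show ?thesis unfolding p_def by (rule someI_ex)
  qed
  have "\<forall>i<m. p i < n \<and> adj n (p i) (p (Suc i mod m))"
  proof (intro allI impI conjI)
    fix i assume i: "i < m"
    show "p i < n" using p i by blast
    have i': "Suc i mod m < m" using m0 by simp
    have "disj n (vC n (p i)) (vC n (p (Suc i mod m)))" using dj i p[OF i] p[OF i'] by metis
    then show "adj n (p i) (p (Suc i mod m))" using disjCC n3 p[OF i] p[OF i'] by blast
  qed
  then show False using walk m by blast
qed

lemma adj3: assumes "n \<ge> 5" "q < n" "adj n q 0" "adj n q (n-1)" shows False
proof -
  have s1: "Suc 0 mod n = 1" "Suc (n-1) mod n = 0" using assms(1) by simp_all
  have "Suc q mod n = (if Suc q = n then 0 else Suc q)" using assms(2) by (simp add: mod_Suc)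
  then show False using assms s1 unfolding adj_def by (auto split: if_splits)
qed


lemma g1: "g n x = 1 \<Longrightarrow> x = vC n 0 \<or> x = vC n (n-1)"
  unfolding g_def by (cases "x = vC n 0 \<or> x = vC n (n-1)") simp_all

lemma pres:
  assumes n3: "n \<ge> 3" and on: "odd n" and mN: "m \<in> Nhat" and mn: "m \<noteq> n"
  shows "F n \<in> pPol (2*m) (R02 m)"
  unfolding pPol_def
proof (intro CollectI conjI allI impI)
  show "is_pfun (F n)" using is_pfun_F n3 .
  fix rows assume a: "length rows = 2*m \<and> (\<forall>r\<in>set rows. r \<in> dom (snd (F n))) \<and>
        (\<forall>j<fst (F n). map (\<lambda>r. r ! j) rows \<in> R02 m)"
  have m3: "m \<ge> 3" "odd m" using mN by (auto simp: Nhat_def)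
  have len: "length rows = 2*m" using a by blast
  have sub: "set rows \<subseteq> D n" using a dom_F by blast
  have cols: "\<forall>t<2*n*n. map (\<lambda>r. r ! t) rows \<in> R02 m" using a by (simp add: F_def)
  define tr where "tr = take m rows"
  define br where "br = drop m rows"
  have ltr: "length tr = m" and lbr: "length br = m" using len by (simp_all add: tr_def br_def)
  have str: "set tr \<subseteq> D n" and sbr: "set br \<subseteq> D n" using sub set_take_subset set_drop_subset
    unfolding tr_def br_def by (metis subset_trans)+
  have colT: "\<forall>t<2*n*n. map (\<lambda>r. r ! t) tr \<in> RC02 m" and colB: "\<forall>t<2*n*n. map (\<lambda>r. r ! t) br \<in> RK02 m"
    using cols col_split[OF len] unfolding tr_def br_def by blast+
  have djT: "\<forall>i<m. disj n (tr!i) (tr!(Suc i mod m))" using top_disj[OF ltr colT] by blast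
  have djB: "\<forall>i<m. \<forall>j<m. i \<noteq> j \<longrightarrow> disj n (br!i) (br!j)" using bot_disj[OF lbr colB] by blast
  have out: "map (\<lambda>r. the (snd (F n) r)) rows = map (g n) rows"
    using sub F_out by (auto intro: map_cong)
  have mlt: "m < n"
  proof (rule ccontr)
    assume "\<not> m < n"
    then have "m > n" using mn by simp
    moreover have "m \<le> n" using bot_bound[OF n3 lbr sbr djB] .
    ultimately show False by simp
  qed
  have n5: "n \<ge> 5" using mlt m3 on by presburger
  have inT: "i < m \<Longrightarrow> tr!i \<in> D n" for i using str ltr nth_mem by blast
  have inB: "i < m \<Longrightarrow> br!i \<in> D n" for i using sbr lbr nth_mem by blast
  have g0T: "g n (tr!i) = 0" if i: "i < m" for i
  proof (rule ccontr)
    assume "g n (tr!i) \<noteq> 0"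
    then have "g n (tr!i) = 1" using g01[of n "tr!i"] by auto
    then have "tr!i \<in> CR n" using g1_CR n3 by blast
    then show False using top_noC[OF n3 m3(2) mlt ltr str djT i] by blast
  qed
  have T: "map (g n) tr \<in> RC02 m"
    unfolding RC02_def
  proof (intro CollectI conjI allI impI)
    show "length (map (g n) tr) = m" using ltr by simp
    show "set (map (g n) tr) \<subseteq> {0,1}" by (auto simp: g_def)
    fix i assume i: "i < m"
    then have "map (g n) tr ! i = 0" using g0T ltr by simp
    moreover have "(i+1) mod m < m" using i by simp
    then have "map (g n) tr ! ((i + 1) mod m) \<in> {0,1}" using ltr g01 by simp
    ultimately show "(map (g n) tr ! i, map (g n) tr ! ((i + 1) mod m)) \<in> rho02"
      by (auto simp: rho02_def)
  qed
  have B: "map (g n) br \<in> RK02 m"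
    unfolding RK02_def
  proof (intro CollectI conjI allI impI)
    show "length (map (g n) br) = m" using lbr by simp
    show "set (map (g n) br) \<subseteq> {0,1}" by (auto simp: g_def)
    fix i j assume ij: "i < m" "j < m" "i \<noteq> j"
    show "(map (g n) br ! i, map (g n) br ! j) \<in> rho02"
    proof (rule ccontr)
      assume "\<not> ?thesis"
      moreover have "map (g n) br ! i = g n (br!i)" "map (g n) br ! j = g n (br!j)" using ij lbr by simp_all
      ultimately have "(g n (br!i), g n (br!j)) \<notin> rho02" by simp
      then have gg: "g n (br!i) = 1" "g n (br!j) = 1"
        using rho_iff[OF g01 g01] by blast+
      have dij: "disj n (br!i) (br!j)" using djB ij by blast
      have neq: "br!i \<noteq> br!j" using dij disj_D_self n3 inB ij(1) by metis
      have xy: "(br!i = vC n 0 \<and> br!j = vC n (n-1)) \<or> (br!i = vC n (n-1) \<and> br!j = vC n 0)"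
        using g1[OF gg(1)] g1[OF gg(2)] neq by metis
      obtain l where l: "l < m" "l \<noteq> i" "l \<noteq> j"
      proof -
        have "\<exists>l\<in>{0,1,2::nat}. l \<noteq> i \<and> l \<noteq> j" by auto
        then obtain l where "l \<in> {0,1,2::nat}" "l \<noteq> i" "l \<noteq> j" by blast
        moreover then have "l < m" using m3 by auto
        ultimately show ?thesis using that by blast
      qed
      have dl: "disj n (br!l) (br!i)" "disj n (br!l) (br!j)" using djB l ij by auto
      have iC: "br!i \<in> CR n" using g1_CR gg n3 by blast
      have lC: "br!l \<in> CR n"
      proof (rule ccontr)
        assume "br!l \<notin> CR n"
        then have "br!l \<in> AR n" using D_cases inB l(1) by blast
        then show False using disj_AC_D iC dl(1) by blast
      qed
      then obtain q where q: "q < n" "br!l = vC n q" unfolding CR_def by blast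
      have "disj n (vC n q) (vC n 0)" "disj n (vC n q) (vC n (n-1))"
        using dl xy q by auto
      then have "adj n q 0" "adj n q (n-1)" using disjCC n3 q(1) by simp_all
      then show False using adj3 n5 q(1) by blast
    qed
  qed
  show "map (\<lambda>r. the (snd (F n) r)) rows \<in> R02 m"
    unfolding out col_split[OF len] using T B unfolding tr_def br_def by blast
qed


lemma D_entry: "x \<in> D n \<Longrightarrow> t < 2*n*n \<Longrightarrow> x!t \<in> {0,1}"
proof -
  assume a: "x \<in> D n" "t < 2*n*n"
  then have "x!t \<in> set x" using D_len by (intro nth_mem) simp
  then show ?thesis using D_set[OF a(1)] by blast
qed

lemma vC_D: "i < n \<Longrightarrow> vC n i \<in> D n" by (auto simp: D_def CR_def)
lemma vA_D: "i < n \<Longrightarrow> vA n i \<in> D n" by (auto simp: D_def AR_def)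

lemma col_set: assumes "set L \<subseteq> D n" "t < 2*n*n" shows "set (map (\<lambda>r. r!t) L) \<subseteq> {0,1}"
proof
  fix x assume "x \<in> set (map (\<lambda>r. r!t) L)"
  then obtain r where r: "r \<in> set L" "x = r!t" unfolding set_map by blast
  then have "r \<in> D n" using assms(1) by blast
  from D_entry[OF this assms(2)] show "x \<in> {0,1}" using r(2) by simp
qed

lemma vC_set: "set (map (vC n) [0..<n]) \<subseteq> D n" using vC_D by auto
lemma vA_set: "set (map (vA n) [0..<n]) \<subseteq> D n" using vA_D by auto

lemma fail_n:
  assumes n3: "n \<ge> 3"
  shows "F n \<notin> pPol (2*n) (R02 n)"
proof
  assume P: "F n \<in> pPol (2*n) (R02 n)"
  define rows where "rows = map (vC n) [0..<n] @ map (vA n) [0..<n]"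
  have len: "length rows = 2*n" by (simp add: rows_def)
  have tk: "take n rows = map (vC n) [0..<n]" and dr: "drop n rows = map (vA n) [0..<n]"
    by (simp_all add: rows_def)
  have inD: "\<forall>r\<in>set rows. r \<in> dom (snd (F n))" using vC_D vA_D dom_F by (auto simp: rows_def)
  have cols: "\<forall>j<fst (F n). map (\<lambda>r. r ! j) rows \<in> R02 n"
  proof (intro allI impI)
    fix t assume "t < fst (F n)"
    then have t: "t < 2*n*n" by (simp add: F_def)
    have T: "map (\<lambda>r. r ! t) (map (vC n) [0..<n]) \<in> RC02 n"
      unfolding RC02_def
    proof (intro CollectI conjI allI impI)
      show "length (map (\<lambda>r. r ! t) (map (vC n) [0..<n])) = n" by simp
      show "set (map (\<lambda>r. r ! t) (map (vC n) [0..<n])) \<subseteq> {0,1}"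
        using col_set[OF vC_set t] .
      fix i assume i: "i < n"
      have i': "(i+1) mod n < n" using i by simp
      have "adj n i ((i+1) mod n)" by (simp add: adj_def)
      then have "disj n (vC n i) (vC n ((i+1) mod n))" using disjCC n3 i i' by blast
      then have "\<not> (vC n i ! t = 1 \<and> vC n ((i+1) mod n) ! t = 1)" using t by (simp add: disj_def)
      then show "(map (\<lambda>r. r ! t) (map (vC n) [0..<n]) ! i, map (\<lambda>r. r ! t) (map (vC n) [0..<n]) ! ((i + 1) mod n)) \<in> rho02"
        using rho_iff[OF D_entry[OF vC_D[OF i] t] D_entry[OF vC_D[OF i'] t]] i i' by simp
    qed
    have B: "map (\<lambda>r. r ! t) (map (vA n) [0..<n]) \<in> RK02 n"
      unfolding RK02_def
    proof (intro CollectI conjI allI impI)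
      show "length (map (\<lambda>r. r ! t) (map (vA n) [0..<n])) = n" by simp
      show "set (map (\<lambda>r. r ! t) (map (vA n) [0..<n])) \<subseteq> {0,1}"
        using col_set[OF vA_set t] .
      fix i j assume ij: "i < n" "j < n" "i \<noteq> j"
      then have "disj n (vA n i) (vA n j)" using disjAA by blast
      then have "\<not> (vA n i ! t = 1 \<and> vA n j ! t = 1)" using t by (simp add: disj_def)
      then show "(map (\<lambda>r. r ! t) (map (vA n) [0..<n]) ! i, map (\<lambda>r. r ! t) (map (vA n) [0..<n]) ! j) \<in> rho02"
        using rho_iff[OF D_entry[OF vA_D[OF ij(1)] t] D_entry[OF vA_D[OF ij(2)] t]] ij by simp
    qed
    show "map (\<lambda>r. r ! t) rows \<in> R02 n" unfolding col_split[OF len] tk dr using T B by blast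
  qed
  have PP: "\<forall>rows. length rows = 2*n \<and> (\<forall>r\<in>set rows. r \<in> dom (snd (F n))) \<and>
        (\<forall>j<fst (F n). map (\<lambda>r. r ! j) rows \<in> R02 n)
        \<longrightarrow> map (\<lambda>r. the (snd (F n) r)) rows \<in> R02 n"
    using P unfolding pPol_def mem_Collect_eq by (rule conjunct2)
  have "map (\<lambda>r. the (snd (F n) r)) rows \<in> R02 n"
    using PP[rule_format, OF conjI[OF len conjI[OF inD cols]]] .
  moreover have "map (\<lambda>r. the (snd (F n) r)) rows = map (g n) rows"
  proof (rule map_cong[OF refl])
    fix r assume "r \<in> set rows" then show "the (snd (F n) r) = g n r" using inD dom_F F_out by blast
  qed
  ultimately have "map (g n) rows \<in> R02 n" by simp
  then have "map (g n) (take n rows) \<in> RC02 n" using col_split[OF len, of "g n"] by blast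
  then have "map (g n) (map (vC n) [0..<n]) \<in> RC02 n" unfolding tk .
  then have "\<forall>i<n. (map (g n) (map (vC n) [0..<n]) ! i, map (g n) (map (vC n) [0..<n]) ! ((i + 1) mod n)) \<in> rho02"
    unfolding RC02_def by blast
  moreover have nn: "n - 1 < n" using n3 by simp
  ultimately have "(map (g n) (map (vC n) [0..<n]) ! (n-1), map (g n) (map (vC n) [0..<n]) ! ((n - 1 + 1) mod n)) \<in> rho02"
    by blast
  moreover have e: "(n - 1 + 1) mod n = 0" using n3 by simp
  ultimately have "(g n (vC n (n-1)), g n (vC n 0)) \<in> rho02"
    using nn n3 by simp
  then show False by (simp add: g_def rho02_def)
qed

theorem mainTheorem18:
  fixes n :: nat and M :: "nat set"
  assumes "n \<in> Nhat" and "M \<subseteq> Nhat - {n}"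
  shows "\<not> (Tzero \<inter> (\<Inter>m\<in>M. pPol (2 * m) (R02 m)) \<subseteq> pPol (2 * n) (R02 n))"
proof
  assume S: "Tzero \<inter> (\<Inter>m\<in>M. pPol (2 * m) (R02 m)) \<subseteq> pPol (2 * n) (R02 n)"
  have n3: "n \<ge> 3" "odd n" using assms(1) by (auto simp: Nhat_def)
  have "F n \<in> Tzero" using Tzero_F n3 by blast
  moreover have "F n \<in> (\<Inter>m\<in>M. pPol (2 * m) (R02 m))"
    using pres[OF n3] assms(2) by blast
  ultimately have "F n \<in> pPol (2 * n) (R02 n)" using S by blast
  then show False using fail_n n3 by blast
qed

end
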